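(* Let $m$ be a non-negative integer and $n$ a positive rational number. Define Ramanujan's integral $$\mathbf{R}_{C}(m,n)=\int_{0}^{\infty}x^{m}\frac{\cos(\pi nx)}{-1+\exp(2\pi\sqrt{x})}\,dx.$$ Then $$\mathbf{R}_{C}(m,n)=-(n\pi)^{-m-1}\sum_{k=0}^{\infty}\left[\sum_{\ell=0}^{\infty}\frac{1}{\ell!}\left\{\frac{-(2\pi+2\pi k)}{\sqrt{n\pi}}\right\}^{\ell}\Gamma\!\left(m+1+\frac{\ell}{2}\right)\sin\!\left(\frac{m\pi}{2}+\frac{\ell\pi}{4}\right)\right]$$ and $$\mathbf{R}_{C}(m,n)=-(n\pi)^{-m-1}\sum_{k=0}^{\infty}\left[\sum_{j=0}^{3}\frac{1}{j!}\left\{\frac{-(2\pi+2\pi k)}{\sqrt{n\pi}}\right\}^{j}\Gamma\!\left(m+1+\frac{j}{2}\right)\sin\!\left(\frac{m\pi}{2}+\frac{j\pi}{4}\right)G_j\!\left(-\frac{\pi^{2}(k+1)^{4}}{4n^{2}}\right)\right],$$ where $G_0(z)={}_{2}F_{3}\!\left(\tfrac{m+1}{2},\tfrac{m+2}{2};\tfrac14,\tfrac12,\tfrac34;z\right)$, $G_1(z)={}_{2}F_{3}\!\left(\tfrac{2m+3}{4},\tfrac{2m+5}{4};\tfrac12,\tfrac34,\tfrac54;z\right)$, $G_2(z)={}_{2}F_{3}\!\left(\tfrac{m+2}{2},\tfrac{m+3}{2};\tfrac34,\tfrac54,\tfrac32;z\right)$, $G_3(z)={}_{2}F_{3}\!\left(\tfrac{2m+5}{4},\tfrac{2m+7}{4};\tfrac54,\tfrac32,\tfrac74;z\right)$.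 (Here $(k+1)^4=\{(2)_k/(1)_k\}^4$, the form used in the paper.)
   Context: For $\alpha\in\mathbb{C}$, $(\alpha)_n=\alpha(\alpha+1)\cdots(\alpha+n-1)$, $(\alpha)_0=1$. ${}_{p}F_{q}(\alpha_1,\dots,\alpha_p;\beta_1,\dots,\beta_q;z)=\sum_{n\ge0}\frac{\prod_i(\alpha_i)_n}{\prod_j(\beta_j)_n}\frac{z^n}{n!}$, entire in $z$ for $p\le q$. $\Gamma$ is Euler's Gamma function. *)

theory Defs
  imports "HOL-Analysis.Analysis"
begin

definition hyp2F3 :: "real \<Rightarrow> real \<Rightarrow> real \<Rightarrow> real \<Rightarrow> real \<Rightarrow> real \<Rightarrow> real" where
  "hyp2F3 a1 a2 b1 b2 b3 z =
     (\<Sum>j. pochhammer a1 j * pochhammer a2 j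
            / (pochhammer b1 j * pochhammer b2 j * pochhammer b3 j) * z ^ j / fact j)"

definition RamanujanRC :: "nat \<Rightarrow> real \<Rightarrow> real" where
  "RamanujanRC m n =
     integral {0<..} (\<lambda>x::real. x ^ m * cos (pi * n * x) / (- 1 + exp (2 * pi * sqrt x)))"

definition G :: "nat \<Rightarrow> nat \<Rightarrow> real \<Rightarrow> real" where
  "G m j z =
     (if j = 0 then hyp2F3 ((real m + 1) / 2) ((real m + 2) / 2) (1/4) (1/2) (3/4) z
      else if j = 1 then hyp2F3 ((2 * real m + 3) / 4) ((2 * real m + 5) / 4) (1/2) (3/4) (5/4) z
      else if j = 2 then hyp2F3 ((real m + 2) / 2) ((real m + 3) / 2) (3/4) (5/4) (3/2) z
      else hyp2F3 ((2 * real m + 5) / 4) ((2 * real m + 7) / 4) (5/4) (3/2) (7/4) z)"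

end

theory Submission
  imports Defs
begin


lemma gamma_scaled:
  fixes t l :: real
  assumes t: "t > 0" and l: "l > 0"
  shows "(\<lambda>x. x powr (t-1) * exp(-l*x)) absolutely_integrable_on {0<..}"
    "integral {0<..} (\<lambda>x. x powr (t-1) * exp(-l*x)) = Gamma t * l powr (-t)"
proof -
  define f where "f = (\<lambda>y::real. y powr (t-1) / exp y)"
  have "(f has_integral Gamma t) {0..}" unfolding f_def by (rule Gamma_integral_real[OF t])
  hence h0: "(f has_integral Gamma t) {0<..}"
  proof (subst has_integral_spike_set_eq[of "{0<..}" "{0..}" f])
    show "negligible {x \<in> {0<..} - {0..}. f x \<noteq> 0}" by (rule negligible_subset[of "{}"]) auto
    show "negligible {x \<in> {0..} - {0<..}. f x \<noteq> 0}"
      by (rule negligible_subset[of "{0}"]) auto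
  qed
  have fabs: "f absolutely_integrable_on {0<..}"
    using h0 by (intro nonnegative_absolutely_integrable_1) (auto simp: f_def integrable_on_def)
  have img: "(\<lambda>x. l*x) ` {0<..} = {0<..}"
  proof
    show "{0<..} \<subseteq> (\<lambda>x. l*x) ` {0<..}"
    proof
      fix y :: real assume "y \<in> {0<..}"
      hence "y = l * (y/l)" "y/l \<in> {0<..}" using l by auto
      thus "y \<in> (\<lambda>x. l*x) ` {0<..}" by blast
    qed
  qed (use l in auto)
  have cv: "(\<lambda>x. \<bar>l\<bar> * f (l*x)) absolutely_integrable_on {0<..} \<and>
           integral {0<..} (\<lambda>x. \<bar>l\<bar> * f (l*x)) = Gamma t
     \<longleftrightarrow> f absolutely_integrable_on ((\<lambda>x. l*x) ` {0<..}) \<and> integral ((\<lambda>x. l*x) ` {0<..}) f = Gamma t"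
    by (rule has_absolute_integral_change_of_variables_1') (use l in \<open>auto intro!: derivative_eq_intros inj_onI\<close>)
  have "(\<lambda>x. \<bar>l\<bar> * f (l*x)) absolutely_integrable_on {0<..} \<and>
           integral {0<..} (\<lambda>x. \<bar>l\<bar> * f (l*x)) = Gamma t"
    using cv fabs h0 img by (simp add: integral_unique)
  moreover have eq: "x powr (t-1) * exp(-l*x) = l powr (-t) * (\<bar>l\<bar> * f (l*x))" if "x \<in> {0<..}" for x
    using that l by (simp add: f_def powr_mult powr_diff powr_minus exp_minus field_simps)
  ultimately have A: "(\<lambda>x. l powr (-t) * (\<bar>l\<bar> * f (l*x))) absolutely_integrable_on {0<..}"
     "integral {0<..} (\<lambda>x. l powr (-t) * (\<bar>l\<bar> * f (l*x))) = Gamma t * l powr (-t)"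
    using absolutely_integrable_scaleR_left[of _ _ "l powr (-t)"] by auto
  have B: "integral {0<..} (\<lambda>x. x powr (t-1) * exp(-l*x)) = integral {0<..} (\<lambda>x. l powr (-t) * (\<bar>l\<bar> * f (l*x)))"
    by (rule integral_cong) (use eq in auto)
  show "(\<lambda>x. x powr (t-1) * exp(-l*x)) absolutely_integrable_on {0<..}"
    by (rule absolutely_integrable_spike[OF A(1), of "{}"]) (use eq in auto)
  show "integral {0<..} (\<lambda>x. x powr (t-1) * exp(-l*x)) = Gamma t * l powr (-t)"
    using A B by simp
qed



lemma exp_partial_le:
  fixes y :: real assumes "y \<ge> 0"
  shows "(\<Sum>k<N. y^k / fact k) \<le> exp y"
proof -
  have "(\<lambda>n. y^n /\<^sub>R fact n) sums exp y" by (rule exp_converges)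
  hence s: "(\<lambda>n. y^n / fact n) sums exp y" by (simp add: divide_inverse_commute)
  have "(\<Sum>k<N. y^k / fact k) \<le> suminf (\<lambda>n. y^n / fact n)"
    by (rule sum_le_suminf) (use s assms in \<open>auto simp: sums_iff\<close>)
  thus ?thesis using s by (simp add: sums_iff)
qed

lemma Gamma_shift_nat:
  fixes s :: real assumes "s > 0"
  shows "Gamma (s + real k) = Gamma s * pochhammer s k"
proof -
  have "s \<notin> \<int>\<^sub>\<le>\<^sub>0" using assms by (auto elim!: nonpos_Ints_cases)
  hence "pochhammer s k = Gamma (s + of_nat k) / Gamma s" by (rule pochhammer_Gamma)
  thus ?thesis using Gamma_real_pos[OF assms] by simp
qed

lemma has_integral_complex_of_real:
  assumes "(f has_integral I) S"
  shows "((\<lambda>x. complex_of_real (f x)) has_integral complex_of_real I) S"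
  using has_integral_linear[OF assms bounded_linear_of_real] by (simp add: o_def)

lemma gchoose_neg_pow:
  "((- complex_of_real s) gchoose k) * (- u)^k = complex_of_real (pochhammer s k / fact k) * u^k"
proof -
  have m: "((-1::complex)^k * (-1)^k) = 1" by (simp add: power_mult_distrib[symmetric])
  have "((- complex_of_real s) gchoose k) * (- u)^k = ((-1)^k * (-1)^k) * (complex_of_real (pochhammer s k) / fact k * u^k)"
    by (subst gbinomial_pochhammer) (simp only: minus_minus pochhammer_of_real power_minus[of u] mult_ac times_divide_eq_left times_divide_eq_right)
  thus ?thesis by (simp only: m mult_1_left of_real_divide of_real_fact)
qed

lemma powr_neg_add_nat:
  fixes l :: real assumes l: "l > 0" shows "l powr (-(s + real k)) = l powr (-s) / l^k"
proof -
  have "l powr (-(s + real k)) = l powr (-s) * l powr (- real k)" by (simp add: powr_add[symmetric])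
  also have "l powr (- real k) = inverse (l ^ k)" using l by (simp add: powr_minus powr_realpow)
  finally show ?thesis by (simp add: divide_inverse)
qed

lemma gamma_complex:
  fixes s :: real and c :: complex
  assumes s: "s > 0" and c: "Re c > 0"
  shows "((\<lambda>x. complex_of_real (x powr (s-1)) * exp (- c * complex_of_real x))
           has_integral complex_of_real (Gamma s) * c powr (- complex_of_real s)) {0<..}"
proof -
  define l where "l = (cmod c)^2 / Re c"
  define w where "w = complex_of_real l - c"
  define r where "r = cmod w"
  have cnz: "c \<noteq> 0" using c by auto
  have l: "l > 0" unfolding l_def using c cnz by auto
  have "(cmod w)^2 = (l - Re c)^2 + (Im c)^2" unfolding w_def by (simp add: cmod_power2)
  also have "\<dots> = l^2 - (cmod c)^2"
  proof -
    have e: "cmod c * cmod c = Re c * Re c + Im c * Im c" using cmod_power2[of c] by (simp add: power2_eq_square)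
    show ?thesis using c unfolding l_def by (simp add: field_simps power2_eq_square e)
  qed
  also have "\<dots> < l^2" using cnz by simp
  finally have "r^2 < l^2" unfolding r_def .
  hence rl: "r < l" using l by (smt (verit) power_mono r_def norm_ge_zero)
  have r0: "r \<ge> 0" unfolding r_def by simp
  define f where "f = (\<lambda>N x. complex_of_real (x powr (s-1) * exp(-l*x)) *
                        (\<Sum>k<N. (w * complex_of_real x)^k / fact k))"
  define g where "g = (\<lambda>x. complex_of_real (x powr (s-1)) * exp (- c * complex_of_real x))"
  define h where "h = (\<lambda>x. x powr (s-1) * exp(-(l-r)*x))"
  define I where "I = (\<lambda>k. complex_of_real (Gamma (s + real k) * l powr (-(s + real k)) / fact k) * w^k)"
  have fk: "((\<lambda>x. complex_of_real (x powr (s-1) * exp(-l*x)) * ((w * complex_of_real x)^k / fact k))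
          has_integral I k) {0<..}" for k
  proof -
    have sk: "s + real k > 0" using s by simp
    have A: "((\<lambda>x. x powr (s + real k - 1) * exp (-l*x)) has_integral
               Gamma (s + real k) * l powr (-(s + real k))) {0<..}"
      using gamma_scaled[OF sk l] by (metis absolutely_integrable_on_def has_integral_integral)
    have A': "((\<lambda>x. x powr (s + real k - 1) * exp (-l*x) / fact k) has_integral
               Gamma (s + real k) * l powr (-(s + real k)) / fact k) {0<..}"
      by (rule has_integral_divide[OF A])
    have B: "((\<lambda>x. complex_of_real (x powr (s + real k - 1) * exp (-l*x) / fact k) * w^k) has_integral I k) {0<..}"
      unfolding I_def by (intro has_integral_mult_left has_integral_complex_of_real A')
    show ?thesis
    proof (rule has_integral_spike[OF _ _ B, of "{}"])
      fix x :: real assume "x \<in> {0<..} - {}"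
      hence x: "x > 0" by simp
      have "x powr (s + real k - 1) = x powr (s-1) * x^k"
        using x by (simp add: powr_add[symmetric] powr_realpow[symmetric] algebra_simps)
      thus "complex_of_real (x powr (s-1) * exp(-l*x)) * ((w * complex_of_real x)^k / fact k) =
            complex_of_real (x powr (s + real k - 1) * exp (-l*x) / fact k) * w^k"
        by (simp add: power_mult_distrib)
    qed auto
  qed
  have fN: "(f N has_integral (\<Sum>k<N. I k)) {0<..}" for N
  proof -
    have "((\<lambda>x. \<Sum>k<N. complex_of_real (x powr (s-1) * exp(-l*x)) * ((w * complex_of_real x)^k / fact k))
          has_integral (\<Sum>k<N. I k)) {0<..}"
      by (intro has_integral_sum fk) auto
    thus ?thesis unfolding f_def by (simp add: sum_distrib_left)
  qed
  have hint: "h integrable_on {0<..}"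
    using gamma_scaled(1)[OF s, of "l - r"] rl unfolding h_def
    by (auto simp: absolutely_integrable_on_def)
  have bound: "norm (f N x) \<le> h x" if "x \<in> {0<..}" for N x
  proof -
    have x: "x > 0" using that by simp
    have "norm (\<Sum>k<N. (w * complex_of_real x)^k / fact k) \<le> (\<Sum>k<N. norm ((w * complex_of_real x)^k / fact k))"
      by (rule norm_sum)
    also have "\<dots> = (\<Sum>k<N. (r*x)^k / fact k)"
      using x by (simp add: norm_divide norm_mult norm_power r_def)
    also have "\<dots> \<le> exp (r*x)" using x r0 by (intro exp_partial_le) simp
    finally have S: "norm (\<Sum>k<N. (w * complex_of_real x)^k / fact k) \<le> exp (r*x)" .
    have "norm (f N x) = x powr (s-1) * exp(-l*x) * norm (\<Sum>k<N. (w * complex_of_real x)^k / fact k)"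
      unfolding f_def using x by (simp add: norm_mult)
    also have "\<dots> \<le> x powr (s-1) * exp(-l*x) * exp (r*x)"
      by (intro mult_left_mono S) auto
    also have "\<dots> = h x" unfolding h_def by (simp add: exp_add[symmetric] algebra_simps)
    finally show ?thesis .
  qed
  have conv: "(\<lambda>N. f N x) \<longlonglongrightarrow> g x" if "x \<in> {0<..}" for x
  proof -
    have "(\<lambda>n. (w * complex_of_real x)^n /\<^sub>R fact n) sums exp (w * complex_of_real x)" by (rule exp_converges)
    hence "(\<lambda>n. (w * complex_of_real x)^n / fact n) sums exp (w * complex_of_real x)"
      by (simp add: scaleR_conv_of_real divide_inverse_commute)
    hence "(\<lambda>N. \<Sum>k<N. (w * complex_of_real x)^k / fact k) \<longlonglongrightarrow> exp (w * complex_of_real x)"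
      by (simp add: sums_def)
    hence "(\<lambda>N. f N x) \<longlonglongrightarrow> complex_of_real (x powr (s-1) * exp(-l*x)) * exp (w * complex_of_real x)"
      unfolding f_def by (intro tendsto_mult tendsto_const)
    also have "complex_of_real (x powr (s-1) * exp(-l*x)) * exp (w * complex_of_real x) = g x"
      unfolding g_def w_def by (simp add: exp_add[symmetric] exp_of_real[symmetric] algebra_simps)
    finally show ?thesis .
  qed
  have fint: "f N integrable_on {0<..}" for N using fN by blast
  have DC: "g integrable_on {0<..}" "(\<lambda>N. integral {0<..} (f N)) \<longlonglongrightarrow> integral {0<..} g"
    using dominated_convergence[OF fint hint bound conv] by auto
  have lim1: "(\<lambda>N. \<Sum>k<N. I k) \<longlonglongrightarrow> integral {0<..} g"
  proof -
    have "integral {0<..} (f N) = (\<Sum>k<N. I k)" for N using fN[of N] by (rule integral_unique)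
    thus ?thesis using DC(2) by simp
  qed
  define z where "z = - (w / complex_of_real l)"
  have nz: "norm z < 1" unfolding z_def using rl l by (simp add: norm_divide r_def)
  have bin: "(\<lambda>k. ((- complex_of_real s) gchoose k) * z^k) sums (1 + z) powr (- complex_of_real s)"
    by (rule gen_binomial_complex[OF nz])
  have bin2: "(\<lambda>k. complex_of_real (Gamma s * l powr (-s)) * (((- complex_of_real s) gchoose k) * z^k))
      sums (complex_of_real (Gamma s * l powr (-s)) * (1 + z) powr (- complex_of_real s))"
    by (rule sums_mult[OF bin])
  have termeq: "complex_of_real (Gamma s * l powr (-s)) * (((- complex_of_real s) gchoose k) * z^k) = I k" for k
  proof -
    have zk: "((- complex_of_real s) gchoose k) * z^k = complex_of_real (pochhammer s k / fact k) * (w / complex_of_real l)^k"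
      unfolding z_def by (rule gchoose_neg_pow)
    have wl: "(w / complex_of_real l)^k = complex_of_real (1 / l^k) * w^k"
      by (simp add: power_divide)
    have r: "Gamma s * l powr (-s) * (pochhammer s k / fact k) * (1 / l^k) = Gamma (s + real k) * l powr (-(s + real k)) / fact k"
      using l by (subst powr_neg_add_nat[OF l]) (simp add: Gamma_shift_nat[OF s] field_simps)
    have "complex_of_real (Gamma s * l powr (-s)) * (((- complex_of_real s) gchoose k) * z^k)
          = complex_of_real (Gamma s * l powr (-s) * (pochhammer s k / fact k) * (1 / l^k)) * w^k"
      unfolding zk wl by (simp only: of_real_mult mult.assoc)
    also have "\<dots> = I k" unfolding I_def r ..
    finally show ?thesis .
  qed
  have "1 + z = c / complex_of_real l" unfolding z_def w_def using l by (simp add: field_simps)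
  hence eqc: "complex_of_real (Gamma s * l powr (-s)) * (1 + z) powr (- complex_of_real s)
         = complex_of_real (Gamma s) * c powr (- complex_of_real s)"
  proof -
    assume e: "1 + z = c / complex_of_real l"
    have "c powr (- complex_of_real s) = (complex_of_real l * (c / complex_of_real l)) powr (- complex_of_real s)"
      using l by simp
    also have "\<dots> = complex_of_real l powr (- complex_of_real s) * (c / complex_of_real l) powr (- complex_of_real s)"
      using l by (intro powr_times_real_left) auto
    also have "complex_of_real l powr (- complex_of_real s) = complex_of_real (l powr (-s))"
      using l powr_of_real[of l "-s"] by simp
    finally show ?thesis using e by simp
  qed
  have "(\<lambda>k. I k) sums (complex_of_real (Gamma s) * c powr (- complex_of_real s))"
    using bin2 unfolding termeq eqc .
  hence lim2: "(\<lambda>N. \<Sum>k<N. I k) \<longlonglongrightarrow> complex_of_real (Gamma s) * c powr (- complex_of_real s)"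
    by (simp add: sums_def)
  have "integral {0<..} g = complex_of_real (Gamma s) * c powr (- complex_of_real s)"
    using LIMSEQ_unique[OF lim1 lim2] .
  with DC(1) show ?thesis unfolding g_def
    using has_integral_integral by metis
qed



lemma Gamma_half_summable:
  fixes al R :: real
  assumes al: "al > 0" and R: "R \<ge> 0"
  shows "summable (\<lambda>l. Gamma (al + real l / 2) / fact l * R^l)"
proof -
  define u where "u = (\<lambda>l::nat. Gamma (al + real l / 2) / fact l * R^l)"
  have u0: "u l \<ge> 0" for l unfolding u_def using al R by (auto intro!: mult_nonneg_nonneg divide_nonneg_pos less_imp_le[OF Gamma_real_pos])
  have rec: "u (l+2) = u l * (R^2 * (al + real l / 2) / ((real l + 1) * (real l + 2)))" for l
  proof -
    have pos: "al + real l / 2 \<notin> \<int>\<^sub>\<le>\<^sub>0" using al by (auto elim!: nonpos_Ints_cases)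
    have "Gamma (al + real (l+2) / 2) = Gamma ((al + real l / 2) + 1)" by (simp add: field_simps)
    also have "\<dots> = (al + real l / 2) * Gamma (al + real l / 2)" by (rule Gamma_plus1[OF pos])
    finally have g: "Gamma (al + real (l+2) / 2) = (al + real l / 2) * Gamma (al + real l / 2)" .
    have f: "fact (l+2) = (real l + 1) * (real l + 2) * (fact l :: real)"
      by (simp add: algebra_simps)
    show ?thesis unfolding u_def g f by (simp add: field_simps power2_eq_square)
  qed
  define q where "q = 4*R^2*al + 2*R^2"
  obtain L :: nat where L: "real L \<ge> q" using real_arch_simple by blast
  have fac: "R^2 * (al + real l / 2) / ((real l + 1) * (real l + 2)) \<le> 1/4" if "l \<ge> L" for l
  proof -
    have lq: "real l + 2 \<ge> q" using L that by simp
    have q0: "q \<ge> 0" unfolding q_def using al R by simp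
    have "(real l + 1) * (real l + 2) \<ge> (real l + 1) * q"
      by (rule mult_left_mono[OF lq]) simp
    moreover have "(real l + 1) * q \<ge> 4 * (R^2 * (al + real l / 2))"
      unfolding q_def using al R by (simp add: algebra_simps)
    ultimately have "4 * (R^2 * (al + real l / 2)) \<le> (real l + 1) * (real l + 2)" by linarith
    moreover have "(real l + 1) * (real l + 2) > 0" by simp
    ultimately show ?thesis by (simp add: divide_le_eq)
  qed
  define M where "M = (u L + u (L+1)) * 2^(L+1)"
  have main: "l \<ge> L \<Longrightarrow> u l \<le> M * (1/2)^l" for l
  proof (induction l rule: less_induct)
    case (less l)
    show ?case
    proof (cases "l < L + 2")
      case True
      hence "l = L \<or> l = L + 1" using less.prems by auto
      hence ul: "u l \<le> u L + u (L+1)" using u0[of L] u0[of "L+1"] by auto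
      have "(2::real)^l \<le> 2^(L+1)" using True by (intro power_increasing) auto
      hence "(u L + u (L+1)) * 1 \<le> (u L + u (L+1)) * (2^(L+1) / 2^l)"
        using u0[of L] u0[of "L+1"] by (intro mult_left_mono) auto
      hence "u L + u (L+1) \<le> M * (1/2)^l" unfolding M_def by (simp add: power_one_over field_simps)
      with ul show ?thesis by linarith
    next
      case False
      then obtain l' where l': "l = l' + 2" "l' \<ge> L" using less.prems by (intro that[of "l - 2"]) auto
      have IH: "u l' \<le> M * (1/2)^l'" using less.IH[of l'] l' by simp
      have "u l = u l' * (R^2 * (al + real l' / 2) / ((real l' + 1) * (real l' + 2)))" using rec l' by simp
      also have "\<dots> \<le> u l' * (1/4)" by (intro mult_left_mono fac l' u0)
      also have "\<dots> \<le> M * (1/2)^l' * (1/4)" using IH by simp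
      also have "\<dots> = M * (1/2)^l" using l' by (simp add: power_add)
      finally show ?thesis .
    qed
  qed
  have "summable (\<lambda>l. M * (1/2::real)^l)" by (intro summable_mult summable_geometric) simp
  moreover have "\<exists>N. \<forall>n\<ge>N. norm (u n) \<le> M * (1/2)^n" using main u0 by auto
  ultimately have "summable u" by (metis summable_comparison_test')
  thus ?thesis unfolding u_def .
qed



definition Dom :: "real \<Rightarrow> real" where
  "Dom x = (if x \<le> 1 then x powr (-1/2) else x powr (-2))"

lemma Dom_integrable: "Dom integrable_on {0<..}"
proof -
  have P: "(\<lambda>x::real. x powr (-1/2)) integrable_on {0<..1}" by (rule integrable_on_powr_from_0') auto
  have A: "Dom integrable_on {0<..1}"
  proof (rule integrable_spike[OF P, of "{}"])
    show "\<And>x. x \<in> {0<..1} - {} \<Longrightarrow> Dom x = x powr (-1/2)" by (simp add: Dom_def)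
  qed auto
  have "(\<lambda>x::real. x powr (-2)) integrable_on {1..}"
    using has_integral_powr_to_inf[of "-2" 1] by (auto simp: integrable_on_def)
  hence "(\<lambda>x::real. x powr (-2)) integrable_on {1<..}"
    by (rule integrable_spike_set) (auto intro: negligible_subset[of "{1}"])
  hence B: "Dom integrable_on {1<..}"
    using integrable_spike[OF _ negligible_empty, of "\<lambda>x::real. x powr (-2)" "{1<..}" Dom] by (auto simp: Dom_def)
  have "{0<..1} \<inter> {1<..} = ({}::real set)" by auto
  thus ?thesis by (intro integrable_Un'[OF A B]) auto
qed

lemma Dom_pos: "x > 0 \<Longrightarrow> Dom x > 0" by (simp add: Dom_def)

lemma pow_le_exp:
  fixes y :: real assumes "y \<ge> 0"
  shows "y^K / fact K \<le> exp y"
proof -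
  have "y^K / fact K \<le> (\<Sum>k<Suc K. y^k / fact k)"
    using assms by (intro member_le_sum) auto
  also have "\<dots> \<le> exp y" by (rule exp_partial_le[OF assms])
  finally show ?thesis .
qed

lemma phi_bound:
  fixes a x :: real assumes a: "a > 0" and x: "x > 0"
  shows "x^m * exp (-a * sqrt x) \<le> max 1 (fact (2*m+4) / a^(2*m+4)) * Dom x"
proof (cases "x \<le> 1")
  case True
  have "x^m \<le> 1" using True x by (simp add: power_le_one)
  moreover have "exp (-a * sqrt x) \<le> 1" using a x by simp
  ultimately have "x^m * exp (-a * sqrt x) \<le> 1"
    by (metis mult_le_one exp_ge_zero zero_le_power less_imp_le x)
  also have "1 \<le> x powr (-1/2)"
  proof -
    have "x powr (1/2) \<le> 1 powr (1/2)" using True x by (intro powr_mono2) auto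
    hence "1 \<le> inverse (x powr (1/2))" using x by (intro one_le_inverse) auto
    thus ?thesis using x by (simp add: powr_minus)
  qed
  also have "\<dots> = Dom x" using True by (simp add: Dom_def)
  also have "Dom x \<le> max 1 (fact (2*m+4) / a^(2*m+4)) * Dom x"
    using Dom_pos[OF x] by (simp add: mult_le_cancel_right1)
  finally show ?thesis .
next
  case False
  define K where "K = 2*m+4"
  have y: "(a * sqrt x)^K / fact K \<le> exp (a * sqrt x)" using a x by (intro pow_le_exp) simp
  have sq: "(sqrt x)^K = x^m * x^2"
  proof -
    have "K = 2*(m+2)" unfolding K_def by simp
    hence "(sqrt x)^K = ((sqrt x)^2)^(m+2)" by (simp only: power_mult)
    also have "\<dots> = x^(m+2)" using x by simp
    finally show ?thesis by (simp add: power_add power2_eq_square)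
  qed
  have pos: "(a * sqrt x)^K / fact K > 0" using a x by simp
  have "x^m * exp (-a * sqrt x) = x^m / exp (a * sqrt x)" by (simp add: exp_minus field_simps)
  also have "\<dots> \<le> x^m / ((a * sqrt x)^K / fact K)"
    using mult_pos_pos[OF exp_gt_zero pos] x by (intro divide_left_mono[OF y]) auto
  also have "\<dots> = fact K / a^K * (1 / x^2)"
    using x a by (simp add: power_mult_distrib sq field_simps)
  also have "1 / x^2 = Dom x" using False x by (simp add: Dom_def powr_minus powr_realpow divide_inverse)
  also have "fact K / a^K * Dom x \<le> max 1 (fact (2*m+4) / a^(2*m+4)) * Dom x"
    unfolding K_def using Dom_pos[OF x] by (intro mult_right_mono) auto
  finally show ?thesis .
qed

lemma kernel_bound:
  fixes x :: real assumes x: "x > 0"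
  shows "x^m / (-1 + exp (2*pi* sqrt x)) \<le> max (1/(2*pi)) (2 * fact (2*m+4) / (2*pi)^(2*m+4)) * Dom x"
proof (cases "x \<le> 1")
  case True
  have y: "2*pi* sqrt x \<le> -1 + exp (2*pi* sqrt x)" using exp_ge_add_one_self[of "2*pi* sqrt x"] by linarith
  have p: "2*pi* sqrt x > 0" using x by simp
  have "x^m \<le> 1" using True x by (simp add: power_le_one)
  hence "x^m / (-1 + exp (2*pi* sqrt x)) \<le> 1 / (2*pi* sqrt x)"
    using y p by (intro frac_le) auto
  also have "\<dots> = 1/(2*pi) * Dom x" using True x by (simp add: Dom_def powr_minus powr_half_sqrt field_simps)
  also have "\<dots> \<le> max (1/(2*pi)) (2 * fact (2*m+4) / (2*pi)^(2*m+4)) * Dom x"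
    using Dom_pos[OF x] by (intro mult_right_mono) auto
  finally show ?thesis .
next
  case False
  define K where "K = 2*m+4"
  define y where "y = 2*pi* sqrt x"
  have y1: "y \<ge> 1" unfolding y_def using False pi_gt3
    by (smt (verit, best) mult_le_cancel_left1 real_sqrt_ge_one)
  have "exp y \<ge> 2" using exp_ge_add_one_self[of y] y1 by linarith
  hence den: "-1 + exp y \<ge> exp y / 2" by simp
  have yK: "y^K / fact K \<le> exp y" using y1 by (intro pow_le_exp) simp
  have pos: "y^K / fact K > 0" using y1 by simp
  have sq: "(sqrt x)^K = x^m * x^2"
  proof -
    have "K = 2*(m+2)" unfolding K_def by simp
    hence "(sqrt x)^K = ((sqrt x)^2)^(m+2)" by (simp only: power_mult)
    also have "\<dots> = x^(m+2)" using x by simp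
    finally show ?thesis by (simp add: power_add power2_eq_square)
  qed
  have "x^m / (-1 + exp y) \<le> x^m / (exp y / 2)"
    using den x y1 \<open>exp y \<ge> 2\<close> by (intro divide_left_mono) (auto intro!: mult_pos_pos)
  also have "\<dots> \<le> x^m / ((y^K / fact K) / 2)"
  proof (rule divide_left_mono)
    show "0 < exp y / 2 * (y ^ K / fact K / 2)" using pos by (intro mult_pos_pos) auto
  qed (use yK x in auto)
  also have "\<dots> = 2 * fact K / (2*pi)^K * (1 / x^2)"
    unfolding y_def using x by (simp add: power_mult_distrib sq field_simps)
  also have "1 / x^2 = Dom x" using False x by (simp add: Dom_def powr_minus powr_realpow divide_inverse)
  also have "2 * fact K / (2*pi)^K * Dom x \<le> max (1/(2*pi)) (2 * fact (2*m+4) / (2*pi)^(2*m+4)) * Dom x"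
    unfolding K_def using Dom_pos[OF x] by (intro mult_right_mono) auto
  finally show ?thesis unfolding y_def .
qed



definition Acoef :: "nat \<Rightarrow> real \<Rightarrow> nat \<Rightarrow> real" where
  "Acoef m a l = (-a)^l / fact l * Gamma (real m + 1 + real l / 2)"

lemma series_integral:
  fixes a :: real and c :: complex
  assumes a: "a > 0" and c: "Re c > 0"
  shows "(\<lambda>l. complex_of_real (Acoef m a l) * c powr (- complex_of_real (real m + 1 + real l / 2)))
           sums integral {0<..} (\<lambda>x. complex_of_real (x^m * exp (-a * sqrt x)) * exp (- c * complex_of_real x))"
    "(\<lambda>x. complex_of_real (x^m * exp (-a * sqrt x)) * exp (- c * complex_of_real x)) integrable_on {0<..}"
proof -
  define e where "e = Re c"
  define I where "I = (\<lambda>l. complex_of_real (Acoef m a l) * c powr (- complex_of_real (real m + 1 + real l / 2)))"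
  define f where "f = (\<lambda>N x. (\<Sum>l<N. complex_of_real ((-a * sqrt x)^l / fact l)) *
                          (complex_of_real (x^m) * exp (- c * complex_of_real x)))"
  define g where "g = (\<lambda>x. complex_of_real (x^m * exp (-a * sqrt x)) * exp (- c * complex_of_real x))"
  define h where "h = (\<lambda>x. exp (a^2/(2*e)) * (x powr (real (m+1) - 1) * exp (-(e/2)*x)))"
  have e: "e > 0" using c e_def by simp
  have fl: "((\<lambda>x. complex_of_real ((-a * sqrt x)^l / fact l) * (complex_of_real (x^m) * exp (- c * complex_of_real x)))
             has_integral I l) {0<..}" for l
  proof -
    define s where "s = real m + 1 + real l / 2"
    have s: "s > 0" unfolding s_def by simp
    have A: "((\<lambda>x. complex_of_real ((-a)^l / fact l) * (complex_of_real (x powr (s-1)) * exp (- c * complex_of_real x)))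
          has_integral complex_of_real ((-a)^l / fact l) * (complex_of_real (Gamma s) * c powr (- complex_of_real s))) {0<..}"
      by (intro has_integral_mult_right gamma_complex s c)
    have Ieq: "I l = complex_of_real ((-a)^l / fact l) * (complex_of_real (Gamma s) * c powr (- complex_of_real s))"
      unfolding I_def Acoef_def s_def by simp
    show ?thesis unfolding Ieq
    proof (rule has_integral_spike[OF _ _ A, of "{}"])
      fix x :: real assume "x \<in> {0<..} - {}"
      hence x: "x > 0" by simp
      have sl: "(sqrt x)^l = x powr (real l / 2)"
      proof -
        have "(sqrt x)^l = (x powr (1/2))^l" using x by (simp add: powr_half_sqrt)
        also have "\<dots> = (x powr (1/2)) powr real l" using x by (intro powr_realpow[symmetric]) simp
        also have "(x powr (1/2)) powr real l = x powr (real l / 2)" by (simp add: powr_powr)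
        finally show ?thesis .
      qed
      have "x powr (s-1) = x powr real m * x powr (real l / 2)"
        unfolding s_def by (simp add: powr_add[symmetric])
      also have "x powr real m = x^m" using x by (simp add: powr_realpow)
      finally have "x powr (s-1) = x^m * (sqrt x)^l" using sl by simp
      hence eq: "x powr (s-1) = x^m * (sqrt x)^l" .
      have p: "(-a * sqrt x)^l = (-a)^l * (sqrt x)^l" by (rule power_mult_distrib)
      have r: "(-a * sqrt x)^l / fact l * x^m = (-a)^l / fact l * x powr (s-1)"
        unfolding p eq by (simp add: algebra_simps)
      show "complex_of_real ((-a * sqrt x)^l / fact l) * (complex_of_real (x^m) * exp (- c * complex_of_real x)) =
            complex_of_real ((-a)^l / fact l) * (complex_of_real (x powr (s-1)) * exp (- c * complex_of_real x))"
        by (simp only: mult.assoc[symmetric] of_real_mult[symmetric] r)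
    qed auto
  qed
  have fN: "(f N has_integral (\<Sum>l<N. I l)) {0<..}" for N
  proof -
    have "((\<lambda>x. \<Sum>l<N. complex_of_real ((-a * sqrt x)^l / fact l) * (complex_of_real (x^m) * exp (- c * complex_of_real x)))
          has_integral (\<Sum>l<N. I l)) {0<..}"
      by (intro has_integral_sum fl) auto
    thus ?thesis unfolding f_def by (simp add: sum_distrib_right)
  qed
  have hint: "h integrable_on {0<..}"
  proof -
    have "(\<lambda>x. x powr (real (m+1) - 1) * exp (- (e/2) * x)) integrable_on {0<..}"
      using gamma_scaled(1)[of "real (m+1)" "e/2"] e by (auto simp: absolutely_integrable_on_def)
    thus ?thesis unfolding h_def by (rule integrable_on_mult_right)
  qed
  have bound: "norm (f N x) \<le> h x" if "x \<in> {0<..}" for N x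
  proof -
    have x: "x > 0" using that by simp
    have "norm (\<Sum>l<N. complex_of_real ((-a * sqrt x)^l / fact l)) \<le> (\<Sum>l<N. norm (complex_of_real ((-a * sqrt x)^l / fact l)))"
      by (rule norm_sum)
    also have "\<dots> = (\<Sum>l<N. (a * sqrt x)^l / fact l)"
      using x a by (simp add: norm_divide norm_mult norm_power abs_mult)
    also have "\<dots> \<le> exp (a * sqrt x)" using x a by (intro exp_partial_le) simp
    finally have S: "norm (\<Sum>l<N. complex_of_real ((-a * sqrt x)^l / fact l)) \<le> exp (a * sqrt x)" .
    have "a * sqrt x \<le> a^2/(2*e) + (e/2) * x"
    proof -
      have "0 \<le> (sqrt (e/2) * sqrt x - a / sqrt (2*e))^2" by simp
      also have "\<dots> = (e/2) * x - a * sqrt x + a^2/(2*e)"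
        using e x by (simp add: power2_eq_square field_simps real_sqrt_mult[symmetric]) (simp add: real_sqrt_mult)
      finally show ?thesis by simp
    qed
    hence ex: "exp (a * sqrt x) * exp (-e * x) \<le> exp (a^2/(2*e)) * exp (-(e/2)*x)"
      by (simp add: exp_add[symmetric])
    have "norm (f N x) = norm (\<Sum>l<N. complex_of_real ((-a * sqrt x)^l / fact l)) * (x^m * exp (-e * x))"
      unfolding f_def e_def using x by (simp add: norm_mult norm_exp_eq_Re norm_power)
    also have "\<dots> \<le> exp (a * sqrt x) * (x^m * exp (-e * x))"
      by (intro mult_right_mono S) (use x in auto)
    also have "\<dots> = x^m * (exp (a * sqrt x) * exp (-e * x))" by simp
    also have "\<dots> \<le> x^m * (exp (a^2/(2*e)) * exp (-(e/2)*x))"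
      by (intro mult_left_mono ex) (use x in auto)
    also have "\<dots> = h x" unfolding h_def using x by (simp add: powr_realpow)
    finally show ?thesis .
  qed
  have conv: "(\<lambda>N. f N x) \<longlonglongrightarrow> g x" if "x \<in> {0<..}" for x
  proof -
    have "(\<lambda>n. (-a * sqrt x)^n /\<^sub>R fact n) sums exp (-a * sqrt x)" by (rule exp_converges)
    hence "(\<lambda>n. complex_of_real ((-a * sqrt x)^n / fact n)) sums complex_of_real (exp (-a * sqrt x))"
      by (intro sums_of_real) (simp add: divide_inverse_commute)
    hence "(\<lambda>N. \<Sum>l<N. complex_of_real ((-a * sqrt x)^l / fact l)) \<longlonglongrightarrow> complex_of_real (exp (-a * sqrt x))"
      by (simp add: sums_def)
    hence "(\<lambda>N. f N x) \<longlonglongrightarrow> complex_of_real (exp (-a * sqrt x)) * (complex_of_real (x^m) * exp (- c * complex_of_real x))"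
      unfolding f_def by (intro tendsto_mult tendsto_const)
    thus ?thesis unfolding g_def by (simp add: mult_ac)
  qed
  have fint: "f N integrable_on {0<..}" for N using fN by blast
  have DC: "g integrable_on {0<..}" "(\<lambda>N. integral {0<..} (f N)) \<longlonglongrightarrow> integral {0<..} g"
    using dominated_convergence[OF fint hint bound conv] by auto
  have "integral {0<..} (f N) = (\<Sum>l<N. I l)" for N using fN[of N] by (rule integral_unique)
  hence "(\<lambda>N. \<Sum>l<N. I l) \<longlonglongrightarrow> integral {0<..} g" using DC(2) by simp
  thus "I sums integral {0<..} g" by (simp add: sums_def)
  show "g integrable_on {0<..}" by (rule DC(1))
qed



lemma Acoef_summable:
  fixes y :: complex assumes a: "a > 0"
  shows "summable (\<lambda>l. complex_of_real (Acoef m a l) * y^l)"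
proof (rule summable_norm_cancel)
  have "summable (\<lambda>l. Gamma (real m + 1 + real l / 2) / fact l * (a * cmod y)^l)"
    using Gamma_half_summable[of "real m + 1" "a * cmod y"] a by simp
  moreover have "norm (complex_of_real (Acoef m a l) * y^l) = Gamma (real m + 1 + real l / 2) / fact l * (a * cmod y)^l" for l
    unfolding Acoef_def using a
    by (simp add: norm_mult norm_divide norm_power abs_mult power_abs power_mult_distrib abs_of_pos[OF Gamma_real_pos])
  ultimately show "summable (\<lambda>l. norm (complex_of_real (Acoef m a l) * y^l))" by simp
qed

lemma powr_split:
  fixes c :: complex assumes "c \<noteq> 0"
  shows "c powr (- complex_of_real (real m + 1 + real l / 2)) =
         c powr (- complex_of_real (real m + 1)) * (c powr (- 1/2))^l"
proof -
  have "c powr (- complex_of_real (real m + 1 + real l / 2)) =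
        exp ((- complex_of_real (real m + 1)) * Ln c + of_nat l * ((-1/2) * Ln c))"
    using assms by (simp add: powr_def algebra_simps)
  also have "\<dots> = exp ((- complex_of_real (real m + 1)) * Ln c) * exp ((-1/2) * Ln c) ^ l"
    by (simp only: exp_add exp_of_nat_mult)
  also have "\<dots> = c powr (- complex_of_real (real m + 1)) * (c powr (- 1/2))^l"
    using assms by (simp add: powr_def)
  finally show ?thesis .
qed

definition Tfun :: "nat \<Rightarrow> real \<Rightarrow> complex \<Rightarrow> complex" where
  "Tfun m a c = (\<Sum>l. complex_of_real (Acoef m a l) * c powr (- complex_of_real (real m + 1 + real l / 2)))"

definition Tfun' :: "nat \<Rightarrow> real \<Rightarrow> complex \<Rightarrow> complex" where
  "Tfun' m a c = c powr (- complex_of_real (real m + 1)) *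
       (\<Sum>l. complex_of_real (Acoef m a l) * (c powr (- 1/2))^l)"

lemma Tfun_eq:
  assumes a: "a > 0" and c: "c \<noteq> 0"
  shows "(\<lambda>l. complex_of_real (Acoef m a l) * c powr (- complex_of_real (real m + 1 + real l / 2))) sums Tfun' m a c"
proof -
  have "(\<lambda>l. c powr (- complex_of_real (real m + 1)) * (complex_of_real (Acoef m a l) * (c powr (- 1/2))^l))
        sums Tfun' m a c"
    unfolding Tfun'_def by (intro sums_mult summable_sums Acoef_summable a)
  thus ?thesis using powr_split[OF c] by (simp add: mult_ac)
qed

lemma Tfun'_cont:
  assumes a: "a > 0" and z: "z \<notin> \<real>\<^sub>\<le>\<^sub>0"
  shows "isCont (Tfun' m a) z"
proof -
  have P: "isCont (\<lambda>y. \<Sum>l. complex_of_real (Acoef m a l) * y^l) w" for w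
    by (rule isCont_powser_converges_everywhere) (rule Acoef_summable[OF a])
  have Q: "isCont (\<lambda>c. c powr (- 1/2 :: complex)) z" using z by (intro continuous_intros) auto
  have R: "isCont (\<lambda>c. c powr (- complex_of_real (real m + 1))) z" using z by (intro continuous_intros) auto
  show ?thesis unfolding Tfun'_def
    by (intro isCont_mult R isCont_o2[OF Q P])
qed

lemma per_k_complex:
  fixes a b :: real
  assumes a: "a > 0" and b: "b > 0"
  shows "((\<lambda>x. complex_of_real (x^m * exp (-a * sqrt x)) * exp (\<i> * complex_of_real (b * x)))
           has_integral Tfun' m a (- (\<i> * complex_of_real b))) {0<..}"
proof -
  define c where "c = (\<lambda>j::nat. complex_of_real (1 / (real j + 1)) - \<i> * complex_of_real b)"
  define F where "F = (\<lambda>j x. complex_of_real (x^m * exp (-a * sqrt x)) * exp (- c j * complex_of_real x))"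
  define g where "g = (\<lambda>x. complex_of_real (x^m * exp (-a * sqrt x)) * exp (\<i> * complex_of_real (b * x)))"
  define C where "C = max 1 (fact (2*m+4) / a^(2*m+4))"
  define z where "z = - (\<i> * complex_of_real b)"
  have cpos: "Re (c j) > 0" for j unfolding c_def by simp
  have cnz: "c j \<noteq> 0" for j using cpos[of j] by auto
  have Fs: "(\<lambda>l. complex_of_real (Acoef m a l) * c j powr (- complex_of_real (real m + 1 + real l / 2)))
           sums integral {0<..} (F j)" "F j integrable_on {0<..}" for j
    unfolding F_def using series_integral[OF a cpos[of j]] by auto
  have intF: "integral {0<..} (F j) = Tfun' m a (c j)" for j
    using sums_unique2[OF Fs(1)[of j] Tfun_eq[OF a cnz[of j]]] .
  have hint: "(\<lambda>x. C * Dom x) integrable_on {0<..}"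
    by (intro integrable_on_mult_right Dom_integrable)
  have bound: "norm (F j x) \<le> C * Dom x" if "x \<in> {0<..}" for j x
  proof -
    have x: "x > 0" using that by simp
    have "norm (F j x) = x^m * exp (-a * sqrt x) * exp (- (1 / (real j + 1)) * x)"
      unfolding F_def c_def using x by (simp add: norm_mult norm_exp_eq_Re norm_power)
    also have "\<dots> \<le> x^m * exp (-a * sqrt x) * 1"
      using x by (intro mult_left_mono) auto
    also have "\<dots> \<le> C * Dom x" unfolding C_def using phi_bound[OF a x, of m] by simp
    finally show ?thesis .
  qed
  have ctend: "c \<longlonglongrightarrow> z"
  proof -
    have l0: "(\<lambda>j. 1 / (real j + 1)) \<longlonglongrightarrow> 0"
      using LIMSEQ_Suc[OF lim_1_over_n] by (simp add: add.commute)
    have "(\<lambda>j. complex_of_real (1 / (real j + 1)) - \<i> * complex_of_real b) \<longlonglongrightarrow> complex_of_real 0 - \<i> * complex_of_real b"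
      by (intro tendsto_intros l0)
    hence "(\<lambda>j. complex_of_real (1 / (real j + 1)) - \<i> * complex_of_real b) \<longlonglongrightarrow> z"
      unfolding z_def by simp
    thus ?thesis unfolding c_def .
  qed
  have conv: "(\<lambda>j. F j x) \<longlonglongrightarrow> g x" if "x \<in> {0<..}" for x
  proof -
    have "(\<lambda>j. F j x) \<longlonglongrightarrow> complex_of_real (x^m * exp (-a * sqrt x)) * exp (- z * complex_of_real x)"
      unfolding F_def by (intro tendsto_intros ctend)
    thus ?thesis unfolding g_def z_def by (simp add: mult_ac)
  qed
  have DC: "g integrable_on {0<..}" "(\<lambda>j. integral {0<..} (F j)) \<longlonglongrightarrow> integral {0<..} g"
    using dominated_convergence[OF Fs(2) hint bound conv] by auto
  have znp: "z \<notin> \<real>\<^sub>\<le>\<^sub>0" unfolding z_def using b by (auto simp: complex_nonpos_Reals_iff)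
  have "(\<lambda>j. Tfun' m a (c j)) \<longlonglongrightarrow> Tfun' m a z"
    by (rule isCont_tendsto_compose[OF Tfun'_cont[OF a znp] ctend])
  hence "(\<lambda>j. integral {0<..} (F j)) \<longlonglongrightarrow> Tfun' m a z" using intF by simp
  hence "integral {0<..} g = Tfun' m a z" using DC(2) LIMSEQ_unique by blast
  thus ?thesis using DC(1) unfolding g_def z_def by (metis has_integral_integral)
qed



lemma powr_neg_ii:
  fixes b s :: real assumes b: "b > 0"
  shows "(- (\<i> * complex_of_real b)) powr (- complex_of_real s) =
         complex_of_real (b powr (-s)) * exp (\<i> * complex_of_real (pi * s / 2))"
proof -
  have z: "- (\<i> * complex_of_real b) = complex_of_real b * (- \<i>)" by simp
  have nz: "- (\<i> * complex_of_real b) \<noteq> 0" using b by simp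
  have L0: "Ln (complex_of_real b * (- \<i>)) = complex_of_real (ln b) + Ln (- \<i>)"
    using Ln_times_of_real[of b "- \<i>"] b by (simp add: Ln_of_real)
  have L: "Ln (- (\<i> * complex_of_real b)) = complex_of_real (ln b) - \<i> * complex_of_real (pi/2)"
    unfolding z L0 Ln_minus_ii by simp
  have "(- (\<i> * complex_of_real b)) powr (- complex_of_real s) =
        exp (complex_of_real (- s * ln b) + \<i> * complex_of_real (pi * s / 2))"
    using nz by (simp add: powr_def L algebra_simps)
  also have "\<dots> = exp (complex_of_real (- s * ln b)) * exp (\<i> * complex_of_real (pi * s / 2))"
    by (rule exp_add)
  also have "exp (complex_of_real (- s * ln b)) = complex_of_real (b powr (-s))"
    unfolding exp_of_real using b by (simp add: powr_def)
  finally show ?thesis .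
qed

lemma t_summable:
  fixes a b :: real assumes a: "a > 0" and b: "b > 0"
  shows "summable (\<lambda>l. (1 / fact l) * (- a / sqrt b)^l * Gamma (real m + 1 + real l / 2)
                     * sin (real m * pi / 2 + real l * pi / 4))"
proof (rule summable_norm_cancel, rule summable_comparison_test')
  show "summable (\<lambda>l. Gamma (real m + 1 + real l / 2) / fact l * (a / sqrt b)^l)"
    using Gamma_half_summable[of "real m + 1" "a / sqrt b"] a b by simp
  fix l :: nat
  have g: "Gamma (real m + 1 + real l / 2) > 0" by (intro Gamma_real_pos) simp
  have "norm ((1 / fact l) * (- a / sqrt b)^l * Gamma (real m + 1 + real l / 2) * sin (real m * pi / 2 + real l * pi / 4))
        = Gamma (real m + 1 + real l / 2) / fact l * (a / sqrt b)^l * \<bar>sin (real m * pi / 2 + real l * pi / 4)\<bar>"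
    using a b g by (simp add: abs_mult power_abs abs_divide)
  also have "\<dots> \<le> Gamma (real m + 1 + real l / 2) / fact l * (a / sqrt b)^l * 1"
    using a b g by (intro mult_left_mono) auto
  finally show "norm (norm ((1 / fact l) * (- a / sqrt b)^l * Gamma (real m + 1 + real l / 2) * sin (real m * pi / 2 + real l * pi / 4)))
        \<le> Gamma (real m + 1 + real l / 2) / fact l * (a / sqrt b)^l" by (simp only: real_norm_def abs_abs mult_1_right)
qed

lemma Re_term:
  fixes a b :: real assumes a: "a > 0" and b: "b > 0"
  shows "Re (complex_of_real (Acoef m a l) * (- (\<i> * complex_of_real b)) powr (- complex_of_real (real m + 1 + real l / 2)))
       = - (b powr (- real m - 1)) * ((1 / fact l) * (- a / sqrt b)^l * Gamma (real m + 1 + real l / 2)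
                     * sin (real m * pi / 2 + real l * pi / 4))"
proof -
  define s where "s = real m + 1 + real l / 2"
  have c: "cos (pi * s / 2) = - sin (real m * pi / 2 + real l * pi / 4)"
  proof -
    have eq: "pi * s / 2 = (real m * pi / 2 + real l * pi / 4) + pi/2" unfolding s_def by (simp add: field_simps)
    show ?thesis by (simp only: eq cos_add cos_pi_half sin_pi_half)
  qed
  have bp: "b powr (-s) = b powr (- real m - 1) * (1 / sqrt b)^l"
  proof -
    have "b powr (-s) = b powr ((- real m - 1) + (- (real l / 2)))"
      by (rule arg_cong[where f="\<lambda>x. b powr x"]) (simp add: s_def)
    also have "\<dots> = b powr (- real m - 1) * b powr (- (real l / 2))" by (rule powr_add)
    also have "b powr (- (real l / 2)) = (b powr (-1/2)) powr real l" by (simp add: powr_powr)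
    also have "\<dots> = (b powr (-1/2))^l" using b by (intro powr_realpow) simp
    also have "b powr (-1/2) = 1 / sqrt b"
    proof -
      have "b powr (-1/2) = inverse (b powr (1/2))" using powr_minus[of b "1/2"] by simp
      also have "b powr (1/2) = sqrt b" using b by (simp add: powr_half_sqrt)
      finally show ?thesis by (simp add: inverse_eq_divide)
    qed
    finally show ?thesis .
  qed
  have "Re (complex_of_real (Acoef m a l) * (- (\<i> * complex_of_real b)) powr (- complex_of_real s))
        = Acoef m a l * b powr (-s) * cos (pi * s / 2)"
    unfolding powr_neg_ii[OF b] by (simp add: Re_exp)
  also have "\<dots> = Acoef m a l * (b powr (- real m - 1) * (1 / sqrt b)^l) * (- sin (real m * pi / 2 + real l * pi / 4))"
    by (simp only: c bp)
  also have "\<dots> = - (b powr (- real m - 1)) * ((1 / fact l) * (- a / sqrt b)^l * Gamma (real m + 1 + real l / 2)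
                     * sin (real m * pi / 2 + real l * pi / 4))"
  proof -
    have p: "(- a / sqrt b)^l = (-a)^l * (1 / sqrt b)^l"
      by (subst power_mult_distrib[symmetric]) simp
    show ?thesis unfolding p Acoef_def by (simp add: field_simps)
  qed
  finally show ?thesis unfolding s_def .
qed

lemma Re_ofreal_exp: "Re (complex_of_real A * exp (\<i> * complex_of_real th)) = A * cos th"
  by (simp add: Re_exp)

lemma per_k:
  fixes a b :: real assumes a: "a > 0" and b: "b > 0"
  shows "((\<lambda>x. x^m * cos (b * x) * exp (-a * sqrt x)) has_integral
          - (b powr (- real m - 1)) * (\<Sum>l. (1 / fact l) * (- a / sqrt b)^l * Gamma (real m + 1 + real l / 2)
                     * sin (real m * pi / 2 + real l * pi / 4))) {0<..}"
proof -
  define z where "z = - (\<i> * complex_of_real b)"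
  define t where "t = (\<lambda>l. (1 / fact l) * (- a / sqrt b)^l * Gamma (real m + 1 + real l / 2)
                     * sin (real m * pi / 2 + real l * pi / 4))"
  have znz: "z \<noteq> 0" unfolding z_def using b by simp
  have S: "(\<lambda>l. complex_of_real (Acoef m a l) * z powr (- complex_of_real (real m + 1 + real l / 2))) sums Tfun' m a z"
    by (rule Tfun_eq[OF a znz])
  hence "(\<lambda>l. Re (complex_of_real (Acoef m a l) * z powr (- complex_of_real (real m + 1 + real l / 2)))) sums Re (Tfun' m a z)"
    by (simp add: sums_complex_iff)
  hence S1: "(\<lambda>l. - (b powr (- real m - 1)) * t l) sums Re (Tfun' m a z)"
    unfolding z_def Re_term[OF a b] t_def .
  have S2: "(\<lambda>l. - (b powr (- real m - 1)) * t l) sums (- (b powr (- real m - 1)) * suminf t)"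
    unfolding t_def by (intro sums_mult summable_sums t_summable a b)
  have eqv: "Re (Tfun' m a z) = - (b powr (- real m - 1)) * suminf t" using sums_unique2[OF S1 S2] .
  have I: "((\<lambda>x. complex_of_real (x^m * exp (-a * sqrt x)) * exp (\<i> * complex_of_real (b * x)))
           has_integral Tfun' m a z) {0<..}" unfolding z_def by (rule per_k_complex[OF a b])
  have H: "((\<lambda>x. Re (complex_of_real (x^m * exp (-a * sqrt x)) * exp (\<i> * complex_of_real (b * x))))
           has_integral Re (Tfun' m a z)) {0<..}"
    using has_integral_linear[OF I bounded_linear_Re] unfolding o_def .
  have R: "Re (complex_of_real (x^m * exp (-a * sqrt x)) * exp (\<i> * complex_of_real (b * x))) =
                 x^m * cos (b * x) * exp (-a * sqrt x)" for x
    unfolding Re_ofreal_exp by (simp only: mult_ac)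
  have H2: "((\<lambda>x. x^m * cos (b * x) * exp (-a * sqrt x)) has_integral Re (Tfun' m a z)) {0<..}"
    using H unfolding R .
  have E: "Re (Tfun' m a z) = - (b powr (- real m - 1)) * (\<Sum>l. (1 / fact l) * (- a / sqrt b)^l * Gamma (real m + 1 + real l / 2)
                     * sin (real m * pi / 2 + real l * pi / 4))"
    using eqv unfolding t_def .
  show ?thesis using H2 unfolding E .
qed



lemma geom_kernel:
  fixes x :: real assumes x: "x > 0"
  shows "(\<lambda>k. exp (- (2 * pi + 2 * pi * real k) * sqrt x)) sums (1 / (-1 + exp (2 * pi * sqrt x)))"
proof -
  define q where "q = exp (- (2 * pi * sqrt x))"
  have q0: "q > 0" and q1: "q < 1" unfolding q_def using x by auto
  have "(\<lambda>k. q^k) sums (1 / (1 - q))" using q0 q1 by (intro geometric_sums) simp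
  hence "(\<lambda>k. q * q^k) sums (q * (1 / (1 - q)))" by (rule sums_mult)
  moreover have "q * q^k = exp (- (2 * pi + 2 * pi * real k) * sqrt x)" for k
  proof -
    have "q^k = exp (real k * (- (2 * pi * sqrt x)))" unfolding q_def by (rule exp_of_nat_mult[symmetric])
    thus ?thesis unfolding q_def by (simp add: exp_add[symmetric] algebra_simps)
  qed
  moreover have "q * (1 / (1 - q)) = 1 / (-1 + exp (2 * pi * sqrt x))"
  proof -
    have e: "exp (2 * pi * sqrt x) = 1 / q" unfolding q_def by (simp add: exp_minus inverse_eq_divide)
    show ?thesis unfolding e using q0 q1 by (simp add: field_simps)
  qed
  ultimately show ?thesis by simp
qed

lemma outer_sum:
  fixes n :: real assumes n: "n > 0"
  shows "(\<lambda>k::nat. - ((n * pi) powr (- real m - 1)) *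
            (\<Sum>l. (1 / fact l) * (- (2 * pi + 2 * pi * real k) / sqrt (n * pi)) ^ l
                   * Gamma (real m + 1 + real l / 2)
                   * sin (real m * pi / 2 + real l * pi / 4)))
           sums RamanujanRC m n"
proof -
  define b where "b = n * pi"
  have b: "b > 0" unfolding b_def using n by simp
  define trm where "trm = (\<lambda>k::nat. - ((n * pi) powr (- real m - 1)) *
            (\<Sum>l. (1 / fact l) * (- (2 * pi + 2 * pi * real k) / sqrt (n * pi)) ^ l
                   * Gamma (real m + 1 + real l / 2)
                   * sin (real m * pi / 2 + real l * pi / 4)))"
  define f where "f = (\<lambda>(k::nat) x. x^m * cos (b * x) * exp (- (2 * pi + 2 * pi * real k) * sqrt x))"
  define F where "F = (\<lambda>N x. \<Sum>k<N. f k x)"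
  define g where "g = (\<lambda>x::real. x^m * cos (pi * n * x) / (-1 + exp (2 * pi * sqrt x)))"
  define C where "C = max (1/(2*pi)) (2 * fact (2*m+4) / (2*pi)^(2*m+4))"
  have fk: "(f k has_integral trm k) {0<..}" for k
  proof -
    have a: "2 * pi + 2 * pi * real k > 0" by (simp add: add_pos_nonneg)
    show ?thesis using per_k[OF a b, of m] unfolding f_def trm_def b_def by (simp add: mult.assoc)
  qed
  have FN: "(F N has_integral (\<Sum>k<N. trm k)) {0<..}" for N
    unfolding F_def by (intro has_integral_sum fk) auto
  have hint: "(\<lambda>x. C * Dom x) integrable_on {0<..}"
    by (intro integrable_on_mult_right Dom_integrable)
  have bound: "norm (F N x) \<le> C * Dom x" if "x \<in> {0<..}" for N x
  proof -
    have x: "x > 0" using that by simp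
    have gs: "(\<lambda>k. exp (- (2 * pi + 2 * pi * real k) * sqrt x)) sums (1 / (-1 + exp (2 * pi * sqrt x)))"
      by (rule geom_kernel[OF x])
    have "norm (F N x) \<le> (\<Sum>k<N. norm (f k x))" unfolding F_def by (rule norm_sum)
    also have "\<dots> \<le> (\<Sum>k<N. x^m * exp (- (2 * pi + 2 * pi * real k) * sqrt x))"
    proof (rule sum_mono)
      fix k
      have "norm (f k x) = x^m * \<bar>cos (b * x)\<bar> * exp (- (2 * pi + 2 * pi * real k) * sqrt x)"
        unfolding f_def using x by (simp add: abs_mult)
      also have "\<dots> \<le> x^m * 1 * exp (- (2 * pi + 2 * pi * real k) * sqrt x)"
        using x by (intro mult_right_mono mult_left_mono) auto
      finally show "norm (f k x) \<le> x^m * exp (- (2 * pi + 2 * pi * real k) * sqrt x)" by simp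
    qed
    also have "\<dots> = x^m * (\<Sum>k<N. exp (- (2 * pi + 2 * pi * real k) * sqrt x))"
      by (simp add: sum_distrib_left)
    also have "\<dots> \<le> x^m * (1 / (-1 + exp (2 * pi * sqrt x)))"
    proof (rule mult_left_mono)
      show "(\<Sum>k<N. exp (- (2 * pi + 2 * pi * real k) * sqrt x)) \<le> 1 / (-1 + exp (2 * pi * sqrt x))"
        using sum_le_suminf[OF sums_summable[OF gs], of "{..<N}"] sums_unique[OF gs] by simp
    qed (use x in simp)
    also have "\<dots> = x^m / (-1 + exp (2 * pi * sqrt x))" by simp
    also have "\<dots> \<le> C * Dom x" unfolding C_def by (rule kernel_bound[OF x])
    finally show ?thesis .
  qed
  have conv: "(\<lambda>N. F N x) \<longlonglongrightarrow> g x" if "x \<in> {0<..}" for x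
  proof -
    have x: "x > 0" using that by simp
    have "(\<lambda>k. x^m * cos (b * x) * exp (- (2 * pi + 2 * pi * real k) * sqrt x)) sums
          (x^m * cos (b * x) * (1 / (-1 + exp (2 * pi * sqrt x))))"
      by (rule sums_mult[OF geom_kernel[OF x]])
    moreover have "x^m * cos (b * x) * (1 / (-1 + exp (2 * pi * sqrt x))) = g x"
      unfolding g_def b_def by (simp add: mult_ac)
    ultimately have "(\<lambda>k. x^m * cos (b * x) * exp (- (2 * pi + 2 * pi * real k) * sqrt x)) sums g x"
      by simp
    thus ?thesis unfolding F_def f_def sums_def .
  qed
  have Fint: "F N integrable_on {0<..}" for N using FN by blast
  have DC: "(\<lambda>N. integral {0<..} (F N)) \<longlonglongrightarrow> integral {0<..} g"
    using dominated_convergence(2)[OF Fint hint bound conv] .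
  have "integral {0<..} (F N) = (\<Sum>k<N. trm k)" for N using FN[of N] by (rule integral_unique)
  hence "(\<lambda>N. \<Sum>k<N. trm k) \<longlonglongrightarrow> RamanujanRC m n"
    using DC unfolding RamanujanRC_def g_def by simp
  thus ?thesis unfolding trm_def sums_def .
qed



lemma Gamma_plus_2i:
  fixes al :: real assumes al: "al > 0"
  shows "Gamma (al + 2 * real i) = Gamma al * 4^i * pochhammer (al/2) i * pochhammer ((al+1)/2) i"
proof (induction i)
  case 0 thus ?case by simp
next
  case (Suc i)
  have p1: "al + 2 * real i + 1 \<notin> \<int>\<^sub>\<le>\<^sub>0" using al by (auto elim!: nonpos_Ints_cases)
  have p0: "al + 2 * real i \<notin> \<int>\<^sub>\<le>\<^sub>0" using al by (auto elim!: nonpos_Ints_cases)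
  have "Gamma (al + 2 * real (Suc i)) = Gamma ((al + 2 * real i + 1) + 1)" by (simp add: algebra_simps)
  also have "\<dots> = (al + 2 * real i + 1) * Gamma (al + 2 * real i + 1)" by (rule Gamma_plus1[OF p1])
  also have "Gamma (al + 2 * real i + 1) = (al + 2 * real i) * Gamma (al + 2 * real i)" by (rule Gamma_plus1[OF p0])
  also note Suc.IH
  finally show ?case by (simp add: pochhammer_Suc field_simps)
qed

lemma fact_4i:
  "(fact (4 * i + j) :: real) = fact j * 256^i * pochhammer ((real j + 1)/4) i * pochhammer ((real j + 2)/4) i
       * pochhammer ((real j + 3)/4) i * pochhammer ((real j + 4)/4) i"
proof (induction i)
  case 0 thus ?case by simp
next
  case (Suc i)
  have e: "4 * Suc i + j = Suc (Suc (Suc (Suc (4 * i + j))))" by simp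
  have "(fact (4 * Suc i + j) :: real) = fact (4 * i + j) * ((real (4*i+j) + 1) * (real (4*i+j) + 2) * (real (4*i+j) + 3) * (real (4*i+j) + 4))"
    unfolding e by (simp add: algebra_simps)
  also note Suc.IH
  finally show ?case by (simp add: pochhammer_Suc field_simps)
qed

definition Kt :: "nat \<Rightarrow> nat \<Rightarrow> real \<Rightarrow> nat \<Rightarrow> real" where
  "Kt m j z i = pochhammer ((real m + 1 + real j / 2) / 2) i * pochhammer ((real m + 1 + real j / 2 + 1) / 2) i /
     (pochhammer ((real j + 1) / 4) i * pochhammer ((real j + 2) / 4) i * pochhammer ((real j + 3) / 4) i
      * pochhammer ((real j + 4) / 4) i) * z^i"

lemma hterm:
  fixes w :: real
  shows "(1 / fact (4*i+j)) * w^(4*i+j) * Gamma (real m + 1 + real (4*i+j) / 2) * sin (real m * pi / 2 + real (4*i+j) * pi / 4)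
     = ((1 / fact j) * w^j * Gamma (real m + 1 + real j / 2) * sin (real m * pi / 2 + real j * pi / 4)) * Kt m j (- (w^4) / 64) i"
proof -
  define al where "al = real m + 1 + real j / 2"
  define th where "th = real m * pi / 2 + real j * pi / 4"
  have al: "al > 0" unfolding al_def by simp
  have g: "Gamma (real m + 1 + real (4*i+j) / 2) = Gamma al * 4^i * pochhammer (al/2) i * pochhammer ((al+1)/2) i"
  proof -
    have "real m + 1 + real (4*i+j) / 2 = al + 2 * real i" unfolding al_def by simp
    thus ?thesis using Gamma_plus_2i[OF al, of i] by simp
  qed
  have s: "sin (real m * pi / 2 + real (4*i+j) * pi / 4) = (-1)^i * sin th"
  proof -
    have "real m * pi / 2 + real (4*i+j) * pi / 4 = th + real i * pi" unfolding th_def by (simp add: field_simps)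
    thus ?thesis by (simp add: sin_add sin_npi cos_npi)
  qed
  define P where "P = pochhammer ((real j + 1) / 4) i * pochhammer ((real j + 2) / 4) i * pochhammer ((real j + 3) / 4) i
      * pochhammer ((real j + 4) / 4) i"
  have P: "P > 0" unfolding P_def by (intro mult_pos_pos pochhammer_pos) auto
  have f: "(fact (4*i+j) :: real) = fact j * 256^i * P" unfolding P_def fact_4i by (simp only: mult.assoc)
  have wp: "w^(4*i+j) = w^j * (w^4)^i" by (simp add: power_add power_mult)
  have K: "Kt m j (- (w^4) / 64) i = pochhammer (al/2) i * pochhammer ((al+1)/2) i / P * ((-1)^i * (w^4)^i / 64^i)"
  proof -
    have "(- (w^4) / 64)^i = ((-1) * (w^4 / 64))^i" by simp
    also have "\<dots> = (-1)^i * ((w^4)^i / 64^i)" by (simp only: power_mult_distrib power_divide)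
    finally have pm: "(- (w^4) / 64)^i = (-1)^i * ((w^4)^i / 64^i)" .
    show ?thesis unfolding Kt_def P_def al_def pm by (simp add: field_simps)
  qed
  have c: "(256::real)^i = 4^i * 64^i" by (simp add: power_mult_distrib[symmetric])
  show ?thesis unfolding g s f wp K al_def[symmetric] th_def[symmetric] c
    using P by (simp add: field_simps)
qed

lemma G_Kt:
  assumes "j < 4"
  shows "G m j z = (\<Sum>i. Kt m j z i)"
proof -
  have j: "j = 0 \<or> j = 1 \<or> j = 2 \<or> j = 3" using assms by auto
  have fi: "pochhammer (1::real) i = fact i" for i by (simp add: pochhammer_fact)
  show ?thesis
  proof (rule disjE[OF j]; (elim disjE)?)
    assume j0: "j = 0"
    have "Kt m 0 z i = pochhammer ((real m + 1) / 2) i * pochhammer ((real m + 2) / 2) i /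
        (pochhammer (1/4) i * pochhammer (1/2) i * pochhammer (3/4) i) * z^i / fact i" for i
    proof -
      have e1: "(real m + 1 + real 0 / 2) / 2 = (real m + 1) / 2" by simp
      have e2: "(real m + 1 + real 0 / 2 + 1) / 2 = (real m + 2) / 2" by simp
      have e3: "(real 0 + 1) / 4 = (1/4::real)" "(real 0 + 2) / 4 = (1/2::real)" "(real 0 + 3) / 4 = (3/4::real)"
               "(real 0 + 4) / 4 = (1::real)" by simp_all
      show ?thesis unfolding Kt_def e1 e2 e3 fi by (simp add: field_simps)
    qed
    thus ?thesis unfolding j0 G_def hyp2F3_def by simp
  next
    assume j1: "j = 1"
    have "Kt m 1 z i = pochhammer ((2 * real m + 3) / 4) i * pochhammer ((2 * real m + 5) / 4) i /
        (pochhammer (1/2) i * pochhammer (3/4) i * pochhammer (5/4) i) * z^i / fact i" for i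
    proof -
      have e1: "(real m + 1 + real 1 / 2) / 2 = (2 * real m + 3) / 4" by simp
      have e2: "(real m + 1 + real 1 / 2 + 1) / 2 = (2 * real m + 5) / 4" by simp
      have e3: "(real 1 + 1) / 4 = (1/2::real)" "(real 1 + 2) / 4 = (3/4::real)" "(real 1 + 3) / 4 = (1::real)"
               "(real 1 + 4) / 4 = (5/4::real)" by simp_all
      show ?thesis unfolding Kt_def e1 e2 e3 fi by (simp add: field_simps)
    qed
    thus ?thesis unfolding j1 G_def hyp2F3_def by simp
  next
    assume j2: "j = 2"
    have "Kt m 2 z i = pochhammer ((real m + 2) / 2) i * pochhammer ((real m + 3) / 2) i /
        (pochhammer (3/4) i * pochhammer (5/4) i * pochhammer (3/2) i) * z^i / fact i" for i
    proof -
      have e1: "(real m + 1 + real 2 / 2) / 2 = (real m + 2) / 2" by simp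
      have e2: "(real m + 1 + real 2 / 2 + 1) / 2 = (real m + 3) / 2" by simp
      have e3: "(real 2 + 1) / 4 = (3/4::real)" "(real 2 + 2) / 4 = (1::real)" "(real 2 + 3) / 4 = (5/4::real)"
               "(real 2 + 4) / 4 = (3/2::real)" by simp_all
      show ?thesis unfolding Kt_def e1 e2 e3 fi by (simp add: field_simps)
    qed
    thus ?thesis unfolding j2 G_def hyp2F3_def by simp
  next
    assume j3: "j = 3"
    have "Kt m 3 z i = pochhammer ((2 * real m + 5) / 4) i * pochhammer ((2 * real m + 7) / 4) i /
        (pochhammer (5/4) i * pochhammer (3/2) i * pochhammer (7/4) i) * z^i / fact i" for i
    proof -
      have e1: "(real m + 1 + real 3 / 2) / 2 = (2 * real m + 5) / 4" by simp
      have e2: "(real m + 1 + real 3 / 2 + 1) / 2 = (2 * real m + 7) / 4" by simp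
      have e3: "(real 3 + 1) / 4 = (1::real)" "(real 3 + 2) / 4 = (5/4::real)" "(real 3 + 3) / 4 = (3/2::real)"
               "(real 3 + 4) / 4 = (7/4::real)" by simp_all
      show ?thesis unfolding Kt_def e1 e2 e3 fi by (simp add: field_simps)
    qed
    thus ?thesis unfolding j3 G_def hyp2F3_def by simp
  qed
qed



lemma sub_summable:
  fixes u :: "nat \<Rightarrow> real"
  assumes u0: "\<And>l. u l \<ge> 0" and su: "summable u"
  shows "summable (\<lambda>i. u (4*i+j))"
proof (rule summableI_nonneg_bounded)
  show "0 \<le> u (4*i+j)" for i by (rule u0)
  fix N
  have inj: "inj_on (\<lambda>i. 4*i+j) {..<N}" by (auto simp: inj_on_def)
  have "(\<Sum>i<N. u (4*i+j)) = sum u ((\<lambda>i. 4*i+j) ` {..<N})"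
    using sum.reindex[OF inj, of u] by (simp add: o_def)
  also have "\<dots> \<le> suminf u" by (rule sum_le_suminf[OF su]) (auto intro: u0)
  finally show "(\<Sum>i<N. u (4*i+j)) \<le> suminf u" .
qed

lemma regroup:
  fixes w :: real
  shows "(\<Sum>l. (1 / fact l) * w^l * Gamma (real m + 1 + real l / 2) * sin (real m * pi / 2 + real l * pi / 4)) =
         (\<Sum>j\<le>3. (1 / fact j) * w^j * Gamma (real m + 1 + real j / 2) * sin (real m * pi / 2 + real j * pi / 4)
            * G m j (- (w^4) / 64))"
proof -
  define t where "t = (\<lambda>l. (1 / fact l) * w^l * Gamma (real m + 1 + real l / 2) * sin (real m * pi / 2 + real l * pi / 4))"
  define C where "C = (\<lambda>j. (1 / fact j) * w^j * Gamma (real m + 1 + real j / 2) * sin (real m * pi / 2 + real j * pi / 4))"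
  define z where "z = - (w^4) / 64"
  define u where "u = (\<lambda>l. Gamma (real m + 1 + real l / 2) / fact l * \<bar>w\<bar>^l)"
  have su: "summable u" unfolding u_def using Gamma_half_summable[of "real m + 1" "\<bar>w\<bar>"] by simp
  have u0: "u l \<ge> 0" for l unfolding u_def by (intro mult_nonneg_nonneg divide_nonneg_pos less_imp_le[OF Gamma_real_pos]) auto
  have tb: "norm (t l) \<le> u l" for l
  proof -
    have g: "Gamma (real m + 1 + real l / 2) > 0" by (intro Gamma_real_pos) simp
    have "norm (t l) = Gamma (real m + 1 + real l / 2) / fact l * \<bar>w\<bar>^l * \<bar>sin (real m * pi / 2 + real l * pi / 4)\<bar>"
      unfolding t_def using g by (simp add: abs_mult power_abs)
    also have "\<dots> \<le> Gamma (real m + 1 + real l / 2) / fact l * \<bar>w\<bar>^l * 1"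
      using g by (intro mult_left_mono) auto
    finally show ?thesis unfolding u_def by simp
  qed
  have ts: "summable t" by (rule summable_norm_cancel, rule summable_comparison_test'[OF su]) (use tb in auto)
  have S: "(\<lambda>i. sum t {i*4..<i*4+4}) sums suminf t"
    by (rule sums_group[OF summable_sums[OF ts]]) simp
  have grp: "sum t {i*4..<i*4+4} = (\<Sum>j<4. t (4*i+j))" for i
  proof -
    have "{i*4..<i*4+4} = (\<lambda>j. 4*i+j) ` {..<4}"
    proof (intro equalityI subsetI)
      fix x assume x: "x \<in> {i*4..<i*4+4}"
      hence "x = 4*i + (x - 4*i)" "x - 4*i \<in> {..<4}" by auto
      thus "x \<in> (\<lambda>j. 4*i+j) ` {..<4}" by (rule image_eqI)
    qed auto
    moreover have "inj_on (\<lambda>j. 4*i+j) {..<4::nat}" by (auto simp: inj_on_def)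
    ultimately show ?thesis using sum.reindex[of "\<lambda>j. 4*i+j" "{..<4::nat}" t] by (simp add: o_def)
  qed
  have each: "(\<lambda>i. t (4*i+j)) sums (C j * G m j z)" if j: "j \<in> {..<4}" for j
  proof -
    have ht: "t (4*i+j) = C j * Kt m j z i" for i unfolding t_def C_def z_def by (rule hterm)
    have ss: "summable (\<lambda>i. t (4*i+j))"
      by (rule summable_norm_cancel, rule summable_comparison_test'[OF sub_summable[OF u0 su, of j]]) (use tb in auto)
    show ?thesis
    proof (cases "C j = 0")
      case True
      thus ?thesis using ht by simp
    next
      case False
      have "summable (\<lambda>i. t (4*i+j) / C j)" by (rule summable_divide[OF ss])
      hence sK: "summable (Kt m j z)" using ht False by simp
      have "Kt m j z sums G m j z" using G_Kt[of j m z] j summable_sums[OF sK] by simp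
      hence "(\<lambda>i. C j * Kt m j z i) sums (C j * G m j z)" by (rule sums_mult)
      thus ?thesis using ht by simp
    qed
  qed
  have "(\<lambda>i. \<Sum>j<4. t (4*i+j)) sums (\<Sum>j<4. C j * G m j z)" by (rule sums_sum[OF each])
  hence "(\<lambda>i. sum t {i*4..<i*4+4}) sums (\<Sum>j<4. C j * G m j z)" using grp by simp
  hence "suminf t = (\<Sum>j<4. C j * G m j z)" using sums_unique2[OF S] by blast
  moreover have "{..<4::nat} = {..3}" by auto
  ultimately show ?thesis unfolding t_def C_def z_def by simp
qed



lemma z_eq:
  fixes n :: real assumes n: "n > 0"
  shows "- ((- (2 * pi + 2 * pi * real k) / sqrt (n * pi))^4) / 64 = - (pi ^ 2 * (real k + 1) ^ 4) / (4 * n ^ 2)"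
proof -
  have np: "n * pi > 0" using n by simp
  have s4: "(sqrt (n * pi))^4 = (n * pi)^2"
  proof -
    have "(sqrt (n * pi))^4 = ((sqrt (n * pi))^2)^2" by (simp add: power_mult[symmetric])
    also have "\<dots> = (n * pi)^2" using np by simp
    finally show ?thesis .
  qed
  have a: "- (2 * pi + 2 * pi * real k) = - (2 * pi * (real k + 1))" by (simp add: algebra_simps)
  have "(- (2 * pi + 2 * pi * real k) / sqrt (n * pi))^4 = (2 * pi * (real k + 1))^4 / (n * pi)^2"
    unfolding a power_divide s4 by simp
  thus ?thesis using n by (simp add: field_simps power2_eq_square power4_eq_xxxx)
qed

theorem mainTheorem6:
  fixes m :: nat and n :: real
  assumes "n \<in> \<rat>" and "n > 0"
  shows "((\<lambda>k::nat. - ((n * pi) powr (- real m - 1)) *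
            (\<Sum>l. (1 / fact l) * (- (2 * pi + 2 * pi * real k) / sqrt (n * pi)) ^ l
                   * Gamma (real m + 1 + real l / 2)
                   * sin (real m * pi / 2 + real l * pi / 4)))
           sums RamanujanRC m n) \<and>
         ((\<lambda>k::nat. - ((n * pi) powr (- real m - 1)) *
            (\<Sum>j\<le>3. (1 / fact j) * (- (2 * pi + 2 * pi * real k) / sqrt (n * pi)) ^ j
                   * Gamma (real m + 1 + real j / 2)
                   * sin (real m * pi / 2 + real j * pi / 4)
                   * G m j (- (pi ^ 2 * (real k + 1) ^ 4) / (4 * n ^ 2))))
           sums RamanujanRC m n)"
proof
  have n: "n > 0" by fact
  show A: "(\<lambda>k::nat. - ((n * pi) powr (- real m - 1)) *
            (\<Sum>l. (1 / fact l) * (- (2 * pi + 2 * pi * real k) / sqrt (n * pi)) ^ l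
                   * Gamma (real m + 1 + real l / 2)
                   * sin (real m * pi / 2 + real l * pi / 4)))
           sums RamanujanRC m n" by (rule outer_sum[OF n])
  have eq: "(\<Sum>j\<le>3. (1 / fact j) * (- (2 * pi + 2 * pi * real k) / sqrt (n * pi)) ^ j
                   * Gamma (real m + 1 + real j / 2)
                   * sin (real m * pi / 2 + real j * pi / 4)
                   * G m j (- (pi ^ 2 * (real k + 1) ^ 4) / (4 * n ^ 2))) =
            (\<Sum>l. (1 / fact l) * (- (2 * pi + 2 * pi * real k) / sqrt (n * pi)) ^ l
                   * Gamma (real m + 1 + real l / 2)
                   * sin (real m * pi / 2 + real l * pi / 4))" for k
    unfolding regroup[where m=m and w="- (2 * pi + 2 * pi * real k) / sqrt (n * pi)"] z_eq[OF n, of k] ..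
  show "(\<lambda>k::nat. - ((n * pi) powr (- real m - 1)) *
            (\<Sum>j\<le>3. (1 / fact j) * (- (2 * pi + 2 * pi * real k) / sqrt (n * pi)) ^ j
                   * Gamma (real m + 1 + real j / 2)
                   * sin (real m * pi / 2 + real j * pi / 4)
                   * G m j (- (pi ^ 2 * (real k + 1) ^ 4) / (4 * n ^ 2))))
           sums RamanujanRC m n" unfolding eq by (rule A)
qed


end
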